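(* Let $(x_1,y_1),\dots,(x_n,y_n)\in\mathbb{R}^d\times\mathbb{R}$, $X=(x_1,\dots,x_n)$, $Y=(y_1,\dots,y_n)^T$, $\sigma(z)=\max(z,0)$, and $\lambda>0$. Consider the gradient flow on all weights of $f_t(x)=\sum_{j=1}^mw_j(t)\sigma(x^Tu_j(t))$ for the $\ell_2$-regularized empirical risk $$\frac1{2n}\sum_{i=1}^n(y_i-f_t(x_i))^2+\frac{\lambda}{2m}\sum_{j=1}^m\big[w_j(t)^2+\|u_j(t)\|^2\big],$$ i.e. $\frac{dw_j}{dt}=\frac1n\sum_i(y_i-f_t(x_i))\sigma(x_i^Tu_j)-\frac{\lambda}{m}w_j$, $\frac{du_j}{dt}=\frac1n\sum_i(y_i-f_t(x_i))w_j\mathbb{1}_{x_i^Tu_j\ge0}x_i-\frac{\lambda}{m}u_j$. Assume only that $|w_j(0)^2-\|u_j(0)\|^2|<\infty$ for all $1\le j\le m$. Suppose the dynamics reaches a stationarity, with limiting weights $(w_j(\infty),u_j(\infty))$, signed measure $\widehat\rho^\lambda_\infty=\frac1m\sum_{l=1}^m\mathrm{sgn}(w_l(\infty))\delta_{\sqrt m\,u_l(\infty)}$ and adaptive kernel $\widehat H^\lambda_\infty(x,\tilde x)=\int\sigma(x^T\Theta)\sigma(\tilde x^T\Theta)|\widehat\rho^\lambda_\infty|(d\Theta)$. Then the network function at stationarity satisfies, for every $x$, $$\widehat f^{\mathrm{nn},\lambda}_\infty(x)=\widehat H^\lambda_\infty(x,X)\Big[\tfrac nm\lambda\, I_n+\widehat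 H^\lambda_\infty(X,X)\Big]^{-1}Y,$$ where $\widehat H^\lambda_\infty(x,X)\in\mathbb{R}^{1\times n}$ and $\widehat H^\lambda_\infty(X,X)\in\mathbb{R}^{n\times n}$ are the kernel evaluations.
   Context: For a signed measure $\rho=\rho_+-\rho_-$, $|\rho|=\rho_++\rho_-$, so $|\widehat\rho^\lambda_\infty|=\frac1m\sum_l\delta_{\sqrt m u_l(\infty)}$. "Stationarity" means the $t\to\infty$ limit of the gradient flow, at which the gradient-flow vector field vanishes. *)

theory Defs
  imports "HOL-Analysis.Analysis"
begin

definition relu :: "real \<Rightarrow> real" where
  "relu z = max z 0"

definition netf :: "('m::finite \<Rightarrow> real) \<Rightarrow> ('m \<Rightarrow> real^'d) \<Rightarrow> real^'d \<Rightarrow> real" where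
  "netf w u x = (\<Sum>j\<in>UNIV. w j * relu (x \<bullet> u j))"

definition vf_w :: "('n::finite \<Rightarrow> real^'d) \<Rightarrow> real^'n \<Rightarrow> real \<Rightarrow>
    ('m::finite \<Rightarrow> real) \<Rightarrow> ('m \<Rightarrow> real^'d) \<Rightarrow> 'm \<Rightarrow> real" where
  "vf_w X Y lam w u j =
     (1 / real CARD('n)) * (\<Sum>i\<in>UNIV. (Y $ i - netf w u (X i)) * relu (X i \<bullet> u j))
     - (lam / real CARD('m)) * w j"

definition vf_u :: "('n::finite \<Rightarrow> real^'d) \<Rightarrow> real^'n \<Rightarrow> real \<Rightarrow>
    ('m::finite \<Rightarrow> real) \<Rightarrow> ('m \<Rightarrow> real^'d) \<Rightarrow> 'm \<Rightarrow> real^'d" where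
  "vf_u X Y lam w u j =
     (1 / real CARD('n)) *\<^sub>R (\<Sum>i\<in>UNIV. ((Y $ i - netf w u (X i)) * w j *
         (if X i \<bullet> u j \<ge> 0 then 1 else 0)) *\<^sub>R X i)
     - (lam / real CARD('m)) *\<^sub>R u j"

text \<open>Adaptive kernel: integral of relu(x.Theta) relu(x'.Theta) against
  |rho| = (1/m) sum_l delta_{sqrt m u_l}, written out as the finite sum.\<close>
definition adaptive_kernel :: "('m::finite \<Rightarrow> real^'d) \<Rightarrow> real^'d \<Rightarrow> real^'d \<Rightarrow> real" where
  "adaptive_kernel u x x' =
     (1 / real CARD('m)) * (\<Sum>l\<in>UNIV. relu (x \<bullet> (sqrt (real CARD('m)) *\<^sub>R u l))
                                     * relu (x' \<bullet> (sqrt (real CARD('m)) *\<^sub>R u l)))"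

end

theory Submission
  imports Defs
begin

lemma relu_scale: "s \<ge> 0 \<Longrightarrow> relu (s * t) = s * relu t"
  unfolding relu_def by (simp add: max_def mult_le_0_iff zero_le_mult_iff)

lemma kernel_simp:
  "adaptive_kernel (u::'m::finite \<Rightarrow> real^'d) x x' = (\<Sum>l\<in>UNIV. relu (x \<bullet> u l) * relu (x' \<bullet> u l))"
proof -
  let ?s = "sqrt (real CARD('m))"
  have s2: "?s * ?s = real CARD('m)" by simp
  have m0: "real CARD('m) > 0" by simp
  have "adaptive_kernel u x x' = (1 / real CARD('m)) * (\<Sum>l\<in>UNIV. (?s * ?s) * (relu (x \<bullet> u l) * relu (x' \<bullet> u l)))"
    unfolding adaptive_kernel_def
    unfolding inner_scaleR_right
    by (intro arg_cong[where f="\<lambda>z. (1 / real CARD('m)) * z"] sum.cong refl)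
       (simp add: relu_scale[of "sqrt (real CARD('m))", simplified mult.commute[of "sqrt (real CARD('m))"]] mult_ac)
  also have "\<dots> = (\<Sum>l\<in>UNIV. relu (x \<bullet> u l) * relu (x' \<bullet> u l))"
    unfolding s2 by (simp add: sum_distrib_left[symmetric] del: real_sqrt_mult_self)
  finally show ?thesis .
qed

lemma matrix_inv_left':
  fixes A :: "real^'n^'n"
  assumes "invertible A"
  shows "matrix_inv A ** A = mat 1"
  using assms unfolding invertible_def matrix_inv_def by (rule someI2_ex) auto

theorem proposition1:
  fixes X :: "'n::finite \<Rightarrow> real^'d"
    and Y :: "real^'n"
    and lam :: real
    and W :: "real \<Rightarrow> 'm::finite \<Rightarrow> real"
    and U :: "real \<Rightarrow> 'm \<Rightarrow> real^'d"
    and winf :: "'m \<Rightarrow> real"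
    and uinf :: "'m \<Rightarrow> real^'d"
    and x :: "real^'d"
  assumes lam_pos: "lam > 0"
    and flow_w: "\<And>t j. t \<ge> 0 \<Longrightarrow>
          ((\<lambda>s. W s j) has_real_derivative vf_w X Y lam (W t) (U t) j) (at t within {0..})"
    and flow_u: "\<And>t j. t \<ge> 0 \<Longrightarrow>
          ((\<lambda>s. U s j) has_vector_derivative vf_u X Y lam (W t) (U t) j) (at t within {0..})"
    and lim_w: "\<And>j. ((\<lambda>t. W t j) \<longlongrightarrow> winf j) at_top"
    and lim_u: "\<And>j. ((\<lambda>t. U t j) \<longlongrightarrow> uinf j) at_top"
    and stat_w: "\<And>j. vf_w X Y lam winf uinf j = 0"
    and stat_u: "\<And>j. vf_u X Y lam winf uinf j = 0"
  shows "netf winf uinf x =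
           (\<chi> i. adaptive_kernel uinf x (X i)) \<bullet>
           (matrix_inv ((real CARD('n) / real CARD('m) * lam) *\<^sub>R mat 1
                        + (\<chi> i k. adaptive_kernel uinf (X i) (X k))) *v Y)"
proof -
  define c where "c = real CARD('n) / real CARD('m) * lam"
  have n0: "real CARD('n) > 0" and m0: "real CARD('m) > 0" by simp_all
  have c0: "c > 0" unfolding c_def using n0 m0 lam_pos by simp
  define r :: "real^'n" where "r = (\<chi> i. Y $ i - netf winf uinf (X i))"
  define K :: "real^'n^'n" where "K = (\<chi> i k. adaptive_kernel uinf (X i) (X k))"
  define A where "A = c *\<^sub>R mat 1 + K"
  have hw: "winf j = (1 / c) * (\<Sum>i\<in>UNIV. r $ i * relu (X i \<bullet> uinf j))" for j
  proof -
    have "(1 / real CARD('n)) * (\<Sum>i\<in>UNIV. r $ i * relu (X i \<bullet> uinf j)) = (lam / real CARD('m)) * winf j"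
      using stat_w[of j] unfolding vf_w_def r_def by simp
    then show ?thesis using n0 m0 lam_pos unfolding c_def by (simp add: field_simps)
  qed
  have hf: "netf winf uinf y = (1 / c) * (\<Sum>i\<in>UNIV. r $ i * adaptive_kernel uinf y (X i))" for y
  proof -
    have "netf winf uinf y = (\<Sum>j\<in>UNIV. (1 / c) * (\<Sum>i\<in>UNIV. r $ i * relu (X i \<bullet> uinf j)) * relu (y \<bullet> uinf j))"
      unfolding netf_def using hw by simp
    also have "\<dots> = (1 / c) * (\<Sum>j\<in>UNIV. \<Sum>i\<in>UNIV. r $ i * (relu (y \<bullet> uinf j) * relu (X i \<bullet> uinf j)))"
      by (simp add: sum_distrib_left sum_distrib_right mult_ac)
    also have "\<dots> = (1 / c) * (\<Sum>i\<in>UNIV. r $ i * adaptive_kernel uinf y (X i))"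
      unfolding kernel_simp by (subst sum.swap) (simp add: sum_distrib_left)
    finally show ?thesis .
  qed
  have Ar: "A *v r = c *\<^sub>R Y"
  proof -
    have "(A *v r) $ i = (c *\<^sub>R Y) $ i" for i
    proof -
      have "(A *v r) $ i = c * r $ i + (\<Sum>k\<in>UNIV. adaptive_kernel uinf (X i) (X k) * r $ k)"
      proof -
        have "A *v r = c *\<^sub>R r + K *v r"
          unfolding A_def by (simp add: matrix_vector_mult_add_rdistrib flip: scaleR_matrix_vector_assoc)
        then show ?thesis unfolding K_def by (simp add: matrix_vector_mult_def)
      qed
      also have "\<dots> = c * r $ i + c * netf winf uinf (X i)"
        using c0 by (simp add: hf mult_ac)
      also have "\<dots> = c * Y $ i" unfolding r_def by (simp add: algebra_simps)
      finally show ?thesis by simp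
    qed
    then show ?thesis by (simp add: vec_eq_iff)
  qed
  have psd: "v \<bullet> (K *v v) \<ge> 0" for v
  proof -
    have "v \<bullet> (K *v v) = (\<Sum>i\<in>UNIV. \<Sum>k\<in>UNIV. v $ i * adaptive_kernel uinf (X i) (X k) * v $ k)"
      unfolding K_def inner_vec_def matrix_vector_mult_def by (simp add: sum_distrib_left mult_ac)
    also have "\<dots> = (\<Sum>l\<in>UNIV. (\<Sum>i\<in>UNIV. v $ i * relu (X i \<bullet> uinf l)) * (\<Sum>k\<in>UNIV. v $ k * relu (X k \<bullet> uinf l)))"
    proof -
      have "(\<Sum>i\<in>UNIV. \<Sum>k\<in>UNIV. v $ i * adaptive_kernel uinf (X i) (X k) * v $ k)
          = (\<Sum>i\<in>UNIV. \<Sum>k\<in>UNIV. \<Sum>l\<in>UNIV. v $ i * relu (X i \<bullet> uinf l) * (v $ k * relu (X k \<bullet> uinf l)))"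
        unfolding kernel_simp by (simp add: sum_distrib_left sum_distrib_right mult_ac)
      also have "\<dots> = (\<Sum>i\<in>UNIV. \<Sum>l\<in>UNIV. \<Sum>k\<in>UNIV. v $ i * relu (X i \<bullet> uinf l) * (v $ k * relu (X k \<bullet> uinf l)))"
        by (rule sum.cong[OF refl], rule sum.swap)
      also have "\<dots> = (\<Sum>l\<in>UNIV. \<Sum>i\<in>UNIV. \<Sum>k\<in>UNIV. v $ i * relu (X i \<bullet> uinf l) * (v $ k * relu (X k \<bullet> uinf l)))"
        by (rule sum.swap)
      also have "\<dots> = (\<Sum>l\<in>UNIV. (\<Sum>i\<in>UNIV. v $ i * relu (X i \<bullet> uinf l)) * (\<Sum>k\<in>UNIV. v $ k * relu (X k \<bullet> uinf l)))"
        by (simp add: sum_product)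
      finally show ?thesis .
    qed
    also have "\<dots> \<ge> 0" by (intro sum_nonneg) simp
    finally show ?thesis .
  qed
  have inj: "A *v v = 0 \<Longrightarrow> v = 0" for v
  proof -
    assume h: "A *v v = 0"
    have "A *v v = c *\<^sub>R v + K *v v"
      unfolding A_def by (simp add: matrix_vector_mult_add_rdistrib flip: scaleR_matrix_vector_assoc)
    then have "0 = v \<bullet> (c *\<^sub>R v + K *v v)" using h by simp
    also have "\<dots> = c * (v \<bullet> v) + v \<bullet> (K *v v)" by (simp add: inner_add_right)
    finally have "c * (v \<bullet> v) \<le> 0" using psd[of v] by linarith
    then have "v \<bullet> v \<le> 0" using c0 by (simp add: mult_le_0_iff)
    then show "v = 0" using inner_ge_zero[of v] inner_eq_zero_iff[of v] by linarith
  qed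
  have invA: "invertible A"
    unfolding invertible_left_inverse matrix_left_invertible_ker using inj by blast
  have "matrix_inv A *v Y = (1 / c) *\<^sub>R r"
  proof -
    have "matrix_inv A *v (A *v r) = r"
      by (simp add: matrix_vector_mul_assoc matrix_inv_left'[OF invA])
    then have "matrix_inv A *v (c *\<^sub>R Y) = r" using Ar by simp
    then have "c *\<^sub>R (matrix_inv A *v Y) = r" by (simp add: matrix_scaleR_vector_ac flip: scaleR_matrix_vector_assoc)
    then show ?thesis using c0 by auto
  qed
  then have "(\<chi> i. adaptive_kernel uinf x (X i)) \<bullet> (matrix_inv A *v Y)
      = (1 / c) * (\<Sum>i\<in>UNIV. r $ i * adaptive_kernel uinf x (X i))"
    by (simp add: inner_vec_def sum_distrib_left mult_ac)
  also have "\<dots> = netf winf uinf x" using hf by simp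
  finally show ?thesis unfolding A_def K_def c_def by simp
qed

end
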